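(* Let $X$ be a compact metric space, $T\colon X\to X$ continuous, and $x\in X$. Then $V^{\log}(x)\subset\overline{\mathrm{conv}}(V(x))$, where the closed convex hull is taken in the space of Borel measures on $X$ with the weak-$*$ topology.
   Context: For $N\ge1$ let $\mathrm{Emp}(x,N)=\frac1N\sum_{n=1}^N\delta_{T^{n-1}(x)}$, and for $N\ge2$ let $\mathrm{Emp}^{\log}(x,N)=\frac1{\log N}\sum_{n=1}^N\frac1n\delta_{T^{n-1}(x)}$. $V(x)$ is the set of Borel probability measures $\nu$ on $X$ such that $\mathrm{Emp}(x,N_k)\to\nu$ weak-$*$ for some increasing sequence $(N_k)$; $V^{\log}(x)$ is the set of Borel probability measures $\nu$ such that $\mathrm{Emp}^{\log}(x,N_k)\to\nu$ weak-$*$ for some increasing sequence $(N_k)$. *)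

theory Defs
  imports "HOL-Analysis.Analysis" "HOL-Probability.Probability"
begin

definition borel_on :: "'a::metric_space set \<Rightarrow> 'a measure" where
  "borel_on X = restrict_space borel X"

definition finite_borel_measures :: "'a::metric_space set \<Rightarrow> 'a measure set" where
  "finite_borel_measures X =
     {\<mu>. space \<mu> = X \<and> sets \<mu> = sets (borel_on X) \<and> finite_measure \<mu>}"

definition prob_borel_measures :: "'a::metric_space set \<Rightarrow> 'a measure set" where
  "prob_borel_measures X =
     {\<mu>. space \<mu> = X \<and> sets \<mu> = sets (borel_on X) \<and> prob_space \<mu>}"

definition wsum_measure ::
  "'a::metric_space set \<Rightarrow> 'b set \<Rightarrow> ('b \<Rightarrow> real) \<Rightarrow> ('b \<Rightarrow> 'a measure) \<Rightarrow> 'a measure" where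
  "wsum_measure X I w \<mu> =
     measure_of X (sets (borel_on X)) (\<lambda>A. \<Sum>i\<in>I. ennreal (w i) * emeasure (\<mu> i) A)"

definition dirac_on :: "'a::metric_space set \<Rightarrow> 'a \<Rightarrow> 'a measure" where
  "dirac_on X y = return (borel_on X) y"

definition Emp :: "'a::metric_space set \<Rightarrow> ('a \<Rightarrow> 'a) \<Rightarrow> 'a \<Rightarrow> nat \<Rightarrow> 'a measure" where
  "Emp X T x N = wsum_measure X {1..N} (\<lambda>n. 1 / real N) (\<lambda>n. dirac_on X ((T ^^ (n - 1)) x))"

(* Emp^log(x,N) = 1/log N \<Sum>_{n=1}^N 1/n \<delta>_{T^{n-1} x}  (used for N \<ge> 2) *)
definition Emp_log :: "'a::metric_space set \<Rightarrow> ('a \<Rightarrow> 'a) \<Rightarrow> 'a \<Rightarrow> nat \<Rightarrow> 'a measure" where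
  "Emp_log X T x N = wsum_measure X {1..N} (\<lambda>n. 1 / (ln (real N) * real n))
                        (\<lambda>n. dirac_on X ((T ^^ (n - 1)) x))"

definition weak_star_conv :: "'a::metric_space set \<Rightarrow> (nat \<Rightarrow> 'a measure) \<Rightarrow> 'a measure \<Rightarrow> bool" where
  "weak_star_conv X \<mu> \<nu> \<longleftrightarrow>
     (\<forall>f::'a \<Rightarrow> real. continuous_on X f \<longrightarrow>
        (\<lambda>k. integral\<^sup>L (\<mu> k) f) \<longlonglongrightarrow> integral\<^sup>L \<nu> f)"

definition weak_star_topology :: "'a::metric_space set \<Rightarrow> 'a measure topology" where
  "weak_star_topology X = topology_generated_by
     {{\<mu> \<in> finite_borel_measures X. integral\<^sup>L \<mu> f \<in> U} | f U.
        continuous_on X f \<and> open (U :: real set)}"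

definition conv_measures :: "'a::metric_space set \<Rightarrow> 'a measure set \<Rightarrow> 'a measure set" where
  "conv_measures X S =
     {wsum_measure X I w \<nu> | (I :: nat set) w \<nu>. finite I \<and> I \<noteq> {} \<and>
        (\<forall>i\<in>I. 0 \<le> w i \<and> \<nu> i \<in> S) \<and> sum w I = 1}"

definition V :: "'a::metric_space set \<Rightarrow> ('a \<Rightarrow> 'a) \<Rightarrow> 'a \<Rightarrow> 'a measure set" where
  "V X T x = {\<nu> \<in> prob_borel_measures X.
      \<exists>N::nat \<Rightarrow> nat. strict_mono N \<and> (\<forall>k. 1 \<le> N k) \<and>
        weak_star_conv X (\<lambda>k. Emp X T x (N k)) \<nu>}"

definition V_log :: "'a::metric_space set \<Rightarrow> ('a \<Rightarrow> 'a) \<Rightarrow> 'a \<Rightarrow> 'a measure set" where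
  "V_log X T x = {\<nu> \<in> prob_borel_measures X.
      \<exists>N::nat \<Rightarrow> nat. strict_mono N \<and> (\<forall>k. 2 \<le> N k) \<and>
        weak_star_conv X (\<lambda>k. Emp_log X T x (N k)) \<nu>}"

end

theory Submission
  imports Defs
begin

lemma space_borel_on[simp]: "space (borel_on X) = X"
  by (simp add: borel_on_def space_restrict_space)

lemma sigma_algebra_borel_on: "sigma_algebra X (sets (borel_on X))"
  using sets.sigma_algebra_axioms[of "borel_on X"] by simp

locale wsum_setup =
  fixes X :: "'a::metric_space set" and I :: "'b set" and w :: "'b \<Rightarrow> real" and \<mu> :: "'b \<Rightarrow> 'a measure"
  assumes finI: "finite I" and wnn: "\<And>i. i \<in> I \<Longrightarrow> 0 \<le> w i"
    and \<mu>fb: "\<And>i. i \<in> I \<Longrightarrow> \<mu> i \<in> finite_borel_measures X"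
begin

abbreviation "W \<equiv> wsum_measure X I w \<mu>"

lemma \<mu>_space: "i \<in> I \<Longrightarrow> space (\<mu> i) = X" and \<mu>_sets: "i \<in> I \<Longrightarrow> sets (\<mu> i) = sets (borel_on X)"
  and \<mu>_fin: "i \<in> I \<Longrightarrow> finite_measure (\<mu> i)"
  using \<mu>fb by (auto simp: finite_borel_measures_def)

lemma W_space[simp]: "space W = X"
  and W_sets[simp]: "sets W = sets (borel_on X)"
proof -
  have "sets (borel_on X) \<subseteq> Pow X" using sets.space_closed[of "borel_on X"] by simp
  then show "space W = X" unfolding wsum_measure_def by (simp add: space_measure_of_conv)
  show "sets W = sets (borel_on X)" unfolding wsum_measure_def
    by (simp add: sigma_algebra.sets_measure_of_eq[OF sigma_algebra_borel_on])
qed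

lemma W_emeasure: assumes "A \<in> sets (borel_on X)"
  shows "emeasure W A = (\<Sum>i\<in>I. ennreal (w i) * emeasure (\<mu> i) A)"
  unfolding wsum_measure_def
proof (rule emeasure_measure_of_sigma[OF sigma_algebra_borel_on _ _ assms])
  show "positive (sets (borel_on X)) (\<lambda>A. \<Sum>i\<in>I. ennreal (w i) * emeasure (\<mu> i) A)"
    by (simp add: positive_def)
  show "countably_additive (sets (borel_on X)) (\<lambda>A. \<Sum>i\<in>I. ennreal (w i) * emeasure (\<mu> i) A)"
  proof (rule countably_additiveI)
    fix A :: "nat \<Rightarrow> 'a set" assume A: "range A \<subseteq> sets (borel_on X)" "disjoint_family A"
    have "(\<Sum>n. \<Sum>i\<in>I. ennreal (w i) * emeasure (\<mu> i) (A n)) = (\<Sum>i\<in>I. \<Sum>n. ennreal (w i) * emeasure (\<mu> i) (A n))"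
      by (rule suminf_sum) simp
    also have "\<dots> = (\<Sum>i\<in>I. ennreal (w i) * emeasure (\<mu> i) (\<Union>n. A n))"
    proof (rule sum.cong[OF refl])
      fix i assume i: "i \<in> I"
      have "(\<Sum>n. emeasure (\<mu> i) (A n)) = emeasure (\<mu> i) (\<Union>n. A n)"
        using A \<mu>_sets[OF i] by (intro suminf_emeasure) auto
      then show "(\<Sum>n. ennreal (w i) * emeasure (\<mu> i) (A n)) = ennreal (w i) * emeasure (\<mu> i) (\<Union>n. A n)"
        by (simp add: ennreal_suminf_cmult)
    qed
    finally show "(\<Sum>n. \<Sum>i\<in>I. ennreal (w i) * emeasure (\<mu> i) (A n)) = (\<Sum>i\<in>I. ennreal (w i) * emeasure (\<mu> i) (\<Union>n. A n))" .
  qed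
qed

lemma W_nn_integral:
  assumes f: "f \<in> borel_measurable (borel_on X)"
  shows "(\<integral>\<^sup>+y. f y \<partial>W) = (\<Sum>i\<in>I. ennreal (w i) * (\<integral>\<^sup>+y. f y \<partial>\<mu> i))"
  using f
proof (induction rule: borel_measurable_induct)
  case (cong f g)
  have "(\<integral>\<^sup>+y. f y \<partial>W) = (\<integral>\<^sup>+y. g y \<partial>W)"
    using cong by (intro nn_integral_cong) auto
  moreover have "\<And>i. i \<in> I \<Longrightarrow> (\<integral>\<^sup>+y. f y \<partial>\<mu> i) = (\<integral>\<^sup>+y. g y \<partial>\<mu> i)"
    using cong \<mu>_space by (intro nn_integral_cong) auto
  ultimately show ?case using cong by simp
next
  case (set A)
  have "(\<integral>\<^sup>+y. indicator A y \<partial>W) = emeasure W A"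
    using set by (intro nn_integral_indicator) simp
  also have "\<dots> = (\<Sum>i\<in>I. ennreal (w i) * emeasure (\<mu> i) A)" using W_emeasure set by simp
  also have "\<dots> = (\<Sum>i\<in>I. ennreal (w i) * (\<integral>\<^sup>+y. indicator A y \<partial>\<mu> i))"
    using set \<mu>_sets by (intro sum.cong refl) (simp add: nn_integral_indicator)
  finally show ?case .
next
  case (mult u c)
  have "(\<integral>\<^sup>+y. c * u y \<partial>W) = c * (\<integral>\<^sup>+y. u y \<partial>W)"
    using mult by (intro nn_integral_cmult) (simp add: measurable_cong_sets[OF W_sets refl])
  moreover have "(\<integral>\<^sup>+y. c * u y \<partial>\<mu> i) = c * (\<integral>\<^sup>+y. u y \<partial>\<mu> i)" if i: "i \<in> I" for i
    using mult by (intro nn_integral_cmult) (simp add: measurable_cong_sets[OF \<mu>_sets[OF i] refl])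
  ultimately show ?case using mult by (simp add: sum_distrib_left mult_ac)
next
  case (add u v)
  have "(\<integral>\<^sup>+y. v y + u y \<partial>W) = (\<integral>\<^sup>+y. v y \<partial>W) + (\<integral>\<^sup>+y. u y \<partial>W)"
    using add by (intro nn_integral_add) (simp_all add: measurable_cong_sets[OF W_sets refl])
  moreover have "(\<integral>\<^sup>+y. v y + u y \<partial>\<mu> i) = (\<integral>\<^sup>+y. v y \<partial>\<mu> i) + (\<integral>\<^sup>+y. u y \<partial>\<mu> i)" if i: "i \<in> I" for i
    using add by (intro nn_integral_add) (simp_all add: measurable_cong_sets[OF \<mu>_sets[OF i] refl])
  ultimately show ?case using add by (simp add: sum.distrib distrib_left)
next
  case (seq U)
  have eq: "(SUP n. U n) = (\<lambda>y. SUP n. U n y)" by (rule ext) (simp add: SUP_apply image_image)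
  have "(\<integral>\<^sup>+y. (SUP n. U n y) \<partial>W) = (SUP n. \<integral>\<^sup>+y. U n y \<partial>W)"
    using seq by (intro nn_integral_monotone_convergence_SUP) (simp_all add: measurable_cong_sets[OF W_sets refl])
  also have "\<dots> = (SUP n. \<Sum>i\<in>I. ennreal (w i) * (\<integral>\<^sup>+y. U n y \<partial>\<mu> i))"
    using seq by simp
  also have "\<dots> = (\<Sum>i\<in>I. SUP n. ennreal (w i) * (\<integral>\<^sup>+y. U n y \<partial>\<mu> i))"
  proof (rule ennreal_SUP_sum)
    fix i assume "i \<in> I"
    show "incseq (\<lambda>n. ennreal (w i) * (\<integral>\<^sup>+y. U n y \<partial>\<mu> i))"
      using \<open>incseq U\<close> unfolding incseq_def
      by (auto intro!: mult_left_mono nn_integral_mono simp: le_fun_def)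
  qed
  also have "\<dots> = (\<Sum>i\<in>I. ennreal (w i) * (\<integral>\<^sup>+y. (SUP n. U n y) \<partial>\<mu> i))"
  proof (rule sum.cong[OF refl])
    fix i assume i: "i \<in> I"
    have "(\<integral>\<^sup>+y. (SUP n. U n y) \<partial>\<mu> i) = (SUP n. \<integral>\<^sup>+y. U n y \<partial>\<mu> i)"
      using seq by (intro nn_integral_monotone_convergence_SUP) (simp_all add: measurable_cong_sets[OF \<mu>_sets[OF i] refl])
    then show "(SUP n. ennreal (w i) * (\<integral>\<^sup>+y. U n y \<partial>\<mu> i)) = ennreal (w i) * (\<integral>\<^sup>+y. (SUP n. U n y) \<partial>\<mu> i)"
      by (simp add: SUP_mult_left_ennreal)
  qed
  finally show ?case unfolding eq .
qed

lemma W_finite: "finite_measure W"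
proof (rule finite_measureI)
  have "emeasure W (space W) = (\<Sum>i\<in>I. ennreal (w i) * emeasure (\<mu> i) X)"
    using W_emeasure[of X] sets.top[of "borel_on X"] by simp
  also have "\<dots> < \<top>"
  proof (subst ennreal_sum_less_top[OF finI], intro ballI)
    fix i assume i: "i \<in> I"
    have "emeasure (\<mu> i) X < \<top>"
      using finite_measure.emeasure_finite[OF \<mu>_fin[OF i], of X] \<mu>_space[OF i]
      by (simp add: top.not_eq_extremum)
    then show "ennreal (w i) * emeasure (\<mu> i) X < \<top>"
      by (simp add: ennreal_mult_less_top)
  qed
  finally show "emeasure W (space W) \<noteq> \<infinity>" by simp
qed

lemma W_fbm: "W \<in> finite_borel_measures X"
  using W_finite by (simp add: finite_borel_measures_def)

lemma W_integral_nonneg: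
  assumes f: "f \<in> borel_measurable (borel_on X)" and B: "\<And>y. y \<in> X \<Longrightarrow> 0 \<le> f y \<and> f y \<le> B"
  shows "integral\<^sup>L W f = (\<Sum>i\<in>I. w i * integral\<^sup>L (\<mu> i) f)"
proof -
  have intW: "integrable W f"
    using B f by (intro finite_measure.integrable_const_bound[OF W_finite, of _ B])
       (auto simp: measurable_cong_sets[OF W_sets refl])
  have intmu: "integrable (\<mu> i) f" if i: "i \<in> I" for i
    using B f \<mu>_space[OF i] by (intro finite_measure.integrable_const_bound[OF \<mu>_fin[OF i], of _ B])
       (auto simp: measurable_cong_sets[OF \<mu>_sets[OF i] refl])
  have "ennreal (integral\<^sup>L W f) = (\<integral>\<^sup>+y. ennreal (f y) \<partial>W)"
    using B by (intro nn_integral_eq_integral[symmetric] intW) auto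
  also have "\<dots> = (\<Sum>i\<in>I. ennreal (w i) * (\<integral>\<^sup>+y. ennreal (f y) \<partial>\<mu> i))"
    using f by (intro W_nn_integral) measurable
  also have "\<dots> = (\<Sum>i\<in>I. ennreal (w i * integral\<^sup>L (\<mu> i) f))"
  proof (rule sum.cong[OF refl])
    fix i assume i: "i \<in> I"
    have "(\<integral>\<^sup>+y. ennreal (f y) \<partial>\<mu> i) = ennreal (integral\<^sup>L (\<mu> i) f)"
      using B \<mu>_space[OF i] by (intro nn_integral_eq_integral intmu[OF i]) auto
    moreover have "0 \<le> integral\<^sup>L (\<mu> i) f" using B \<mu>_space[OF i] by (intro integral_nonneg_AE) auto
    ultimately show "ennreal (w i) * (\<integral>\<^sup>+y. ennreal (f y) \<partial>\<mu> i) = ennreal (w i * integral\<^sup>L (\<mu> i) f)"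
      using wnn[OF i] by (simp add: ennreal_mult)
  qed
  also have "\<dots> = ennreal (\<Sum>i\<in>I. w i * integral\<^sup>L (\<mu> i) f)"
  proof (rule sum_ennreal)
    fix i assume i: "i \<in> I"
    have "0 \<le> integral\<^sup>L (\<mu> i) f" using B \<mu>_space[OF i] by (intro integral_nonneg_AE) auto
    then show "0 \<le> w i * integral\<^sup>L (\<mu> i) f" using wnn[OF i] by simp
  qed
  finally have *: "ennreal (integral\<^sup>L W f) = ennreal (\<Sum>i\<in>I. w i * integral\<^sup>L (\<mu> i) f)" .
  have "0 \<le> integral\<^sup>L W f" using B by (intro integral_nonneg_AE) auto
  moreover have "0 \<le> (\<Sum>i\<in>I. w i * integral\<^sup>L (\<mu> i) f)"
  proof (rule sum_nonneg)
    fix i assume i: "i \<in> I"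
    have "0 \<le> integral\<^sup>L (\<mu> i) f" using B \<mu>_space[OF i] by (intro integral_nonneg_AE) auto
    then show "0 \<le> w i * integral\<^sup>L (\<mu> i) f" using wnn[OF i] by simp
  qed
  ultimately show ?thesis using * by simp
qed

lemma W_measure: "measure W X = (\<Sum>i\<in>I. w i * measure (\<mu> i) X)"
proof -
  have "integral\<^sup>L W (\<lambda>_. 1::real) = (\<Sum>i\<in>I. w i * integral\<^sup>L (\<mu> i) (\<lambda>_. 1::real))"
    by (rule W_integral_nonneg[of _ 1]) auto
  then show ?thesis using \<mu>_space by simp
qed

lemma W_integral:
  assumes f: "f \<in> borel_measurable (borel_on X)" and B: "\<And>y. y \<in> X \<Longrightarrow> \<bar>f y\<bar> \<le> B"
  shows "integral\<^sup>L W f = (\<Sum>i\<in>I. w i * integral\<^sup>L (\<mu> i) f)"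
proof -
  define g where "g y = f y + B" for y
  have gm: "g \<in> borel_measurable (borel_on X)" using f unfolding g_def by measurable
  have g: "0 \<le> g y \<and> g y \<le> 2 * B" if "y \<in> X" for y using B[OF that] unfolding g_def by (auto simp: abs_le_iff)
  have intW: "integrable W f"
    using B f by (intro finite_measure.integrable_const_bound[OF W_finite, of _ B])
       (auto simp: measurable_cong_sets[OF W_sets refl])
  have intmu: "integrable (\<mu> i) f" if i: "i \<in> I" for i
    using B f \<mu>_space[OF i] by (intro finite_measure.integrable_const_bound[OF \<mu>_fin[OF i], of _ B])
       (auto simp: measurable_cong_sets[OF \<mu>_sets[OF i] refl])
  have gW: "integral\<^sup>L W g = integral\<^sup>L W f + measure W X * B"
  proof -
    have "integral\<^sup>L W g = integral\<^sup>L W f + integral\<^sup>L W (\<lambda>_. B)"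
      unfolding g_def by (rule Bochner_Integration.integral_add[OF intW finite_measure.integrable_const[OF W_finite]])
    then show ?thesis by simp
  qed
  have gmu: "integral\<^sup>L (\<mu> i) g = integral\<^sup>L (\<mu> i) f + measure (\<mu> i) X * B" if i: "i \<in> I" for i
  proof -
    have "integral\<^sup>L (\<mu> i) g = integral\<^sup>L (\<mu> i) f + integral\<^sup>L (\<mu> i) (\<lambda>_. B)"
      unfolding g_def by (rule Bochner_Integration.integral_add[OF intmu[OF i] finite_measure.integrable_const[OF \<mu>_fin[OF i]]])
    then show ?thesis using \<mu>_space[OF i] by simp
  qed
  have "integral\<^sup>L W g = (\<Sum>i\<in>I. w i * integral\<^sup>L (\<mu> i) g)"
    by (rule W_integral_nonneg[OF gm g])
  also have "\<dots> = (\<Sum>i\<in>I. w i * integral\<^sup>L (\<mu> i) f) + (\<Sum>i\<in>I. w i * measure (\<mu> i) X) * B"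
    using gmu by (simp add: sum.distrib sum_distrib_right sum_distrib_left distrib_left mult_ac)
  finally show ?thesis using gW W_measure by simp
qed

lemma W_prob:
  assumes "\<And>i. i \<in> I \<Longrightarrow> prob_space (\<mu> i)" and "sum w I = 1"
  shows "W \<in> prob_borel_measures X"
proof -
  have "measure (\<mu> i) X = 1" if "i \<in> I" for i using assms(1)[OF that] \<mu>_space[OF that] prob_space.prob_space by metis
  then have "measure W X = 1" using W_measure assms by (simp)
  then have "emeasure W (space W) = 1"
    using W_finite by (simp add: finite_measure.emeasure_eq_measure)
  then have "prob_space W" by (rule prob_spaceI)
  then show ?thesis by (simp add: prob_borel_measures_def)
qed

end

lemma cont_bounded:
  fixes f :: "'a::metric_space \<Rightarrow> real"
  assumes "compact X" "continuous_on X f"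
  obtains B where "0 \<le> B" "\<And>y. y \<in> X \<Longrightarrow> \<bar>f y\<bar> \<le> B"
proof -
  have "bounded (f ` X)" using assms by (intro compact_imp_bounded compact_continuous_image)
  then obtain B where "\<forall>z\<in>f ` X. norm z \<le> B" by (auto simp: bounded_iff)
  then have "\<And>y. y \<in> X \<Longrightarrow> \<bar>f y\<bar> \<le> max 0 B" by fastforce
  then show ?thesis using that[of "max 0 B"] by auto
qed

lemma cont_meas: "continuous_on X f \<Longrightarrow> f \<in> borel_measurable (borel_on X)"
  unfolding borel_on_def by (rule borel_measurable_continuous_on_restrict)

lemma prob_fbm: "\<mu> \<in> prob_borel_measures X \<Longrightarrow> \<mu> \<in> finite_borel_measures X"
proof -
  assume a: "\<mu> \<in> prob_borel_measures X"
  then have "prob_space \<mu>" by (simp add: prob_borel_measures_def)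
  then have "finite_measure \<mu>" by (intro finite_measureI) (simp add: prob_space.emeasure_space_1)
  then show ?thesis using a by (simp add: prob_borel_measures_def finite_borel_measures_def)
qed

lemma dirac_prob: "y \<in> X \<Longrightarrow> dirac_on X y \<in> prob_borel_measures X"
  by (auto simp: dirac_on_def prob_borel_measures_def intro!: prob_space_return)

lemma dirac_int: "y \<in> X \<Longrightarrow> (f :: 'a::metric_space \<Rightarrow> real) \<in> borel_measurable (borel_on X) \<Longrightarrow> integral\<^sup>L (dirac_on X y) f = f y"
  unfolding dirac_on_def by (subst integral_return) auto

lemma prob_int_bound:
  fixes f :: "'a::metric_space \<Rightarrow> real"
  assumes "\<mu> \<in> prob_borel_measures X" "f \<in> borel_measurable (borel_on X)" "\<And>y. y \<in> X \<Longrightarrow> \<bar>f y\<bar> \<le> B"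
  shows "\<bar>integral\<^sup>L \<mu> f\<bar> \<le> B"
proof -
  interpret prob_space \<mu> using assms(1) by (simp add: prob_borel_measures_def)
  have sp: "space \<mu> = X" and st: "sets \<mu> = sets (borel_on X)" using assms(1) by (auto simp: prob_borel_measures_def)
  have fm: "f \<in> borel_measurable \<mu>" using assms(2) by (simp add: measurable_cong_sets[OF st refl])
  obtain y0 where "y0 \<in> X" using not_empty sp by auto
  then have B0: "0 \<le> B" using assms(3)[of y0] by linarith
  have "\<bar>integral\<^sup>L \<mu> f\<bar> \<le> integral\<^sup>L \<mu> (\<lambda>y. \<bar>f y\<bar>)" using integral_norm_bound[of \<mu> f] by simp
  also have "\<dots> \<le> integral\<^sup>L \<mu> (\<lambda>y. B)"
    using assms(3) sp fm B0 by (intro integral_mono integrable_const_bound[of _ B]) auto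
  also have "\<dots> = B" by (simp add: prob_space)
  finally show ?thesis .
qed

context
  fixes X :: "'a::metric_space set" and T :: "'a \<Rightarrow> 'a" and x :: 'a
  assumes TX: "T ` X \<subseteq> X" and xX: "x \<in> X"
begin

lemma orbit_in: "(T ^^ n) x \<in> X"
  by (induction n) (use TX xX in auto)

lemma Emp_setup: "wsum_setup X {1..N} (\<lambda>n. 1 / real N) (\<lambda>n. dirac_on X ((T ^^ (n - 1)) x))"
  by unfold_locales (auto intro!: prob_fbm dirac_prob orbit_in)

lemma Emp_prob: "1 \<le> N \<Longrightarrow> Emp X T x N \<in> prob_borel_measures X"
  unfolding Emp_def
  by (rule wsum_setup.W_prob[OF Emp_setup]) (use dirac_prob[OF orbit_in] in \<open>auto simp: prob_borel_measures_def\<close>)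

lemma Emp_int:
  assumes "compact X" "continuous_on X f"
  shows "integral\<^sup>L (Emp X T x N) f = (\<Sum>n=1..N. f ((T ^^ (n - 1)) x)) / real N"
proof -
  obtain B where B: "\<And>y. y \<in> X \<Longrightarrow> \<bar>f y\<bar> \<le> B" using cont_bounded assms by blast
  have "integral\<^sup>L (Emp X T x N) f = (\<Sum>n=1..N. 1 / real N * integral\<^sup>L (dirac_on X ((T ^^ (n - 1)) x)) f)"
    unfolding Emp_def by (rule wsum_setup.W_integral[OF Emp_setup cont_meas[OF assms(2)] B])
  also have "\<dots> = (\<Sum>n=1..N. f ((T ^^ (n - 1)) x)) / real N"
    by (simp add: dirac_int orbit_in cont_meas[OF assms(2)] sum_divide_distrib)
  finally show ?thesis .
qed

lemma Emp_log_setup: "2 \<le> N \<Longrightarrow> wsum_setup X {1..N} (\<lambda>n. 1 / (ln (real N) * real n)) (\<lambda>n. dirac_on X ((T ^^ (n - 1)) x))"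
  by unfold_locales (auto intro!: prob_fbm dirac_prob orbit_in)

lemma Emp_log_int:
  assumes "compact X" "continuous_on X f" "2 \<le> N"
  shows "integral\<^sup>L (Emp_log X T x N) f = (\<Sum>n=1..N. f ((T ^^ (n - 1)) x) / real n) / ln (real N)"
proof -
  obtain B where B: "\<And>y. y \<in> X \<Longrightarrow> \<bar>f y\<bar> \<le> B" using cont_bounded assms by blast
  have "integral\<^sup>L (Emp_log X T x N) f = (\<Sum>n=1..N. 1 / (ln (real N) * real n) * integral\<^sup>L (dirac_on X ((T ^^ (n - 1)) x)) f)"
    unfolding Emp_log_def by (rule wsum_setup.W_integral[OF Emp_log_setup[OF assms(3)] cont_meas[OF assms(2)] B])
  also have "\<dots> = (\<Sum>n=1..N. f ((T ^^ (n - 1)) x) / real n) / ln (real N)"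
    by (simp add: dirac_int orbit_in cont_meas[OF assms(2)] sum_divide_distrib mult.commute)
  finally show ?thesis .
qed

end

definition nbhd_ok :: "'a::metric_space set \<Rightarrow> 'a measure \<Rightarrow> 'a measure set \<Rightarrow> bool" where
  "nbhd_ok X \<nu> W \<longleftrightarrow> (\<exists>(F :: ('a \<Rightarrow> real) set) e. finite F \<and> (\<forall>f\<in>F. continuous_on X f) \<and> 0 < e \<and>
      {\<mu> \<in> finite_borel_measures X. \<forall>f\<in>F. \<bar>integral\<^sup>L \<mu> f - integral\<^sup>L \<nu> f\<bar> < e} \<subseteq> W)"

lemma nbhd_lemma:
  fixes X :: "'a::metric_space set"
  assumes "generate_topology_on {{\<mu> \<in> finite_borel_measures X. integral\<^sup>L \<mu> f \<in> U} | f U.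
        continuous_on X f \<and> open (U :: real set)} W"
  shows "\<nu> \<in> W \<Longrightarrow> nbhd_ok X \<nu> W"
  using assms
proof (induction arbitrary: \<nu>)
  case Empty
  then show ?case by simp
next
  case (Int a b)
  have "nbhd_ok X \<nu> a" "nbhd_ok X \<nu> b" using Int by auto
  then obtain F1 :: "('a \<Rightarrow> real) set" and e1 and F2 :: "('a \<Rightarrow> real) set" and e2 where 1: "finite F1" "\<forall>f\<in>F1. continuous_on X f" "0 < e1"
      "{\<mu> \<in> finite_borel_measures X. \<forall>f\<in>F1. \<bar>integral\<^sup>L \<mu> f - integral\<^sup>L \<nu> f\<bar> < e1} \<subseteq> a"
    and 2: "finite F2" "\<forall>f\<in>F2. continuous_on X f" "0 < e2"
      "{\<mu> \<in> finite_borel_measures X. \<forall>f\<in>F2. \<bar>integral\<^sup>L \<mu> f - integral\<^sup>L \<nu> f\<bar> < e2} \<subseteq> b"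
    unfolding nbhd_ok_def by blast
  have "{\<mu> \<in> finite_borel_measures X. \<forall>f\<in>F1 \<union> F2. \<bar>integral\<^sup>L \<mu> f - integral\<^sup>L \<nu> f\<bar> < min e1 e2} \<subseteq> a \<inter> b"
    using 1(4) 2(4) by auto
  then show ?case unfolding nbhd_ok_def using 1 2
    by (intro exI[of _ "F1 \<union> F2"] exI[of _ "min e1 e2"]) auto
next
  case (UN K)
  then obtain k where "k \<in> K" "\<nu> \<in> k" by auto
  with UN.IH[of k \<nu>] show ?case unfolding nbhd_ok_def by blast
next
  case (Basis s)
  then obtain f :: "'a \<Rightarrow> real" and U :: "real set" where s: "s = {\<mu> \<in> finite_borel_measures X. integral\<^sup>L \<mu> f \<in> U}" and f: "continuous_on X f" and U: "open U"
    by auto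
  have "integral\<^sup>L \<nu> f \<in> U" using Basis s by auto
  then obtain e where e: "0 < e" "ball (integral\<^sup>L \<nu> f) e \<subseteq> U" using U openE by blast
  show ?case unfolding nbhd_ok_def
    apply (rule exI[of _ "{f}"], rule exI[of _ e])
    using e f s by (auto simp: dist_real_def abs_minus_commute subset_iff)
qed

lemma closure_crit:
  fixes X :: "'a::metric_space set"
  assumes nu: "\<nu> \<in> finite_borel_measures X"
    and approx: "\<And>(F :: ('a \<Rightarrow> real) set) e. finite F \<Longrightarrow> (\<forall>f\<in>F. continuous_on X f) \<Longrightarrow> 0 < e \<Longrightarrow>
        \<exists>c\<in>A. c \<in> finite_borel_measures X \<and> (\<forall>f\<in>F. \<bar>integral\<^sup>L c f - integral\<^sup>L \<nu> f\<bar> < e)"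
  shows "\<nu> \<in> (weak_star_topology X) closure_of A"
proof -
  have S0: "{\<mu> \<in> finite_borel_measures X. integral\<^sup>L \<mu> (\<lambda>_. 0::real) \<in> UNIV} \<in> {{\<mu> \<in> finite_borel_measures X. integral\<^sup>L \<mu> f \<in> U} | f U.
        continuous_on X f \<and> open (U :: real set)}"
    by (intro CollectI exI[of _ "\<lambda>_. 0::real"] exI[of _ "UNIV :: real set"]) auto
  have "\<nu> \<in> topspace (weak_star_topology X)"
    unfolding weak_star_topology_def topology_generated_by_topspace
    using nu UnionI[OF S0] by auto
  moreover have "\<exists>y\<in>A. y \<in> W" if "\<nu> \<in> W" "openin (weak_star_topology X) W" for W
  proof -
    have "nbhd_ok X \<nu> W"
      using that by (intro nbhd_lemma) (auto simp: weak_star_topology_def openin_topology_generated_by_iff)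
    then obtain F :: "('a \<Rightarrow> real) set" and e where "finite F" "\<forall>f\<in>F. continuous_on X f" "0 < e"
      and sub: "{\<mu> \<in> finite_borel_measures X. \<forall>f\<in>F. \<bar>integral\<^sup>L \<mu> f - integral\<^sup>L \<nu> f\<bar> < e} \<subseteq> W"
      unfolding nbhd_ok_def by blast
    then obtain c where "c \<in> A" "c \<in> finite_borel_measures X" "\<forall>f\<in>F. \<bar>integral\<^sup>L c f - integral\<^sup>L \<nu> f\<bar> < e"
      using approx by blast
    then show ?thesis using sub by blast
  qed
  ultimately show ?thesis unfolding closure_of_def by blast
qed

lemma abs_tri: "\<bar>a - t\<bar> < d \<Longrightarrow> \<bar>b - t'\<bar> < d' \<Longrightarrow> \<bar>t - t'\<bar> \<le> d'' \<Longrightarrow> \<bar>a - b\<bar> < d + d' + (d''::real)"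
  by (simp add: abs_less_iff abs_le_iff)

locale coding =
  fixes X :: "'a::metric_space set" and cs :: "nat \<Rightarrow> 'a list"
  assumes cmpX: "compact X" and Xne: "X \<noteq> {}"
    and cover: "\<And>n y. y \<in> X \<Longrightarrow> \<exists>i<length (cs n). dist y (cs n ! i) < 1 / real (Suc n)"
    and nonempty: "\<And>n. cs n \<noteq> []"
begin

definition eps :: "nat \<Rightarrow> real" where "eps n = 1 / real (Suc n)"
definition M :: "nat \<Rightarrow> nat" where "M n = length (cs n)"
definition sig :: "nat \<Rightarrow> 'a \<Rightarrow> nat" where
  "sig n y = (LEAST i. i < M n \<and> dist y (cs n ! i) < eps n)"
definition P :: "nat \<Rightarrow> real" where "P n = (\<Prod>j<n. 4 * real (M j))"
definition r :: "nat \<Rightarrow> real" where "r n = 1 / P (Suc n)"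
definition tm :: "nat \<Rightarrow> 'a \<Rightarrow> real" where "tm n y = real (sig n y) * r n"
definition s :: "'a \<Rightarrow> real" where "s y = (\<Sum>n. tm n y)"
definition tail :: "nat \<Rightarrow> 'a \<Rightarrow> real" where "tail m y = (\<Sum>k. tm (k + Suc m) y)"

lemma eps_pos: "0 < eps n" by (simp add: eps_def)

lemma M_pos: "1 \<le> M n" using nonempty[of n] by (simp add: M_def Suc_le_eq)

lemma sig: "y \<in> X \<Longrightarrow> sig n y < M n \<and> dist y (cs n ! sig n y) < eps n"
  unfolding sig_def using LeastI_ex[of "\<lambda>i. i < M n \<and> dist y (cs n ! i) < eps n"] cover[of y n]
  by (auto simp: M_def eps_def)

lemma sig_dist: "y \<in> X \<Longrightarrow> z \<in> X \<Longrightarrow> sig n y = sig n z \<Longrightarrow> dist y z < 2 * eps n"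
  using sig[of y n] sig[of z n] dist_triangle2[of y z "cs n ! sig n y"] by (simp add: dist_commute)

lemma P_Suc: "P (Suc n) = P n * (4 * real (M n))" by (simp add: P_def)

lemma P_ge: "4 ^ n \<le> P n"
proof (induction n)
  case 0 then show ?case by (simp add: P_def)
next
  case (Suc n)
  have "(0::real) \<le> 4 ^ n" by simp
  then have "0 \<le> P n" using Suc by linarith
  have "(4::real) ^ n * 4 \<le> P n * (4 * real (M n))"
    using Suc M_pos[of n] \<open>0 \<le> P n\<close> by (intro mult_mono) auto
  then have "(4::real) ^ Suc n \<le> P n * (4 * real (M n))" by simp
  then show ?case by (simp add: P_Suc)
qed

lemma P_pos: "0 < P n" using P_ge[of n] by (smt (verit) zero_less_power)

lemma P_add: "P n * 4 ^ k \<le> P (n + k)"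
proof (induction k)
  case 0 then show ?case by simp
next
  case (Suc k)
  have "P n * 4 ^ Suc k = (P n * 4 ^ k) * 4" by simp
  also have "\<dots> \<le> P (n + k) * (4 * real (M (n + k)))"
    using Suc M_pos[of "n + k"] P_pos[of n] P_pos[of "n + k"] by (intro mult_mono) auto
  finally show ?case by (simp add: P_Suc)
qed

lemma r_pos: "0 < r n" using P_pos by (simp add: r_def)

lemma r_Suc: "r (Suc n) \<le> r n"
proof -
  have "P (Suc n) \<le> P (Suc (Suc n))"
    using P_add[of "Suc n" 1] P_pos[of "Suc n"] by simp
  then show ?thesis unfolding r_def using P_pos[of "Suc n"] P_pos[of "Suc (Suc n)"] by (intro divide_left_mono) auto
qed

lemma r_anti: "m \<le> n \<Longrightarrow> r n \<le> r m"
  using decseq_SucI[of r, OF r_Suc] by (simp add: decseq_def)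

lemma tm_nonneg: "0 \<le> tm n y" using less_imp_le[OF r_pos[of n]] by (simp add: tm_def)

lemma tm_le: assumes "y \<in> X" shows "tm n y \<le> 1 / (4 * P n)"
proof -
  have "real (sig n y) \<le> real (M n)" using sig[OF assms, of n] by simp
  then have "tm n y \<le> real (M n) * r n" unfolding tm_def using less_imp_le[OF r_pos[of n]] by (intro mult_right_mono) auto
  also have "\<dots> = 1 / (4 * P n)" using M_pos[of n] P_pos[of n] by (simp add: r_def P_Suc field_simps)
  finally show ?thesis .
qed

lemma tm_le_geom: assumes "y \<in> X" shows "tm n y \<le> (1/4) ^ n"
proof -
  have "tm n y \<le> 1 / (4 * P n)" by (rule tm_le[OF assms])
  also have "\<dots> \<le> 1 / (4 * 4 ^ n)" using P_ge[of n] P_pos[of n] by (intro divide_left_mono mult_left_mono) auto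
  also have "\<dots> \<le> (1/4) ^ n" by (simp add: power_one_over field_simps)
  finally show ?thesis .
qed

lemma summable_tm: "y \<in> X \<Longrightarrow> summable (\<lambda>n. tm n y)"
  by (rule summable_comparison_test'[of "\<lambda>n. (1/4::real) ^ n" 0])
     (auto simp: tm_nonneg tm_le_geom summable_geometric)

lemma tm_tail_le: assumes "y \<in> X" shows "tm (k + Suc m) y \<le> r m / 4 * (1/4) ^ k"
proof -
  have "tm (k + Suc m) y \<le> 1 / (4 * P (Suc m + k))" using tm_le[OF assms] by (simp add: add.commute)
  also have "\<dots> \<le> 1 / (4 * (P (Suc m) * 4 ^ k))"
    using P_add[of "Suc m" k] P_pos[of "Suc m"] P_pos[of "Suc m + k"] by (intro divide_left_mono mult_left_mono mult_pos_pos) auto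
  also have "\<dots> = r m / 4 * (1/4) ^ k" by (simp add: r_def power_one_over field_simps)
  finally show ?thesis .
qed

lemma tail_bound: assumes "y \<in> X" shows "0 \<le> tail m y" "tail m y \<le> r m / 3"
proof -
  have sm: "summable (\<lambda>k. tm (k + Suc m) y)"
    using summable_ignore_initial_segment[OF summable_tm[OF assms], of "Suc m"] by simp
  show "0 \<le> tail m y" unfolding tail_def by (intro suminf_nonneg sm tm_nonneg)
  have g: "(\<lambda>k. r m / 4 * (1/4::real) ^ k) sums (r m / 4 * (1 / (1 - 1/4)))"
    by (intro sums_mult geometric_sums) simp
  have "tail m y \<le> (\<Sum>k. r m / 4 * (1/4::real) ^ k)"
    unfolding tail_def by (intro suminf_le sm sums_summable[OF g] tm_tail_le[OF assms])
  also have "\<dots> = r m / 3" using sums_unique[OF g] by simp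
  finally show "tail m y \<le> r m / 3" .
qed

lemma s_split: assumes "y \<in> X" shows "s y = tail m y + tm m y + (\<Sum>n<m. tm n y)"
  using suminf_split_initial_segment[OF summable_tm[OF assms], of "Suc m"]
  by (simp add: s_def tail_def)

lemma s_range: assumes "y \<in> X" shows "0 \<le> s y" "s y \<le> 2"
proof -
  show "0 \<le> s y" unfolding s_def by (intro suminf_nonneg summable_tm[OF assms] tm_nonneg)
  have g: "(\<lambda>k. (1/4::real) ^ k) sums (1 / (1 - 1/4))" by (intro geometric_sums) simp
  have "s y \<le> (\<Sum>k. (1/4::real) ^ k)"
    unfolding s_def by (intro suminf_le summable_tm[OF assms] sums_summable[OF g] tm_le_geom[OF assms])
  also have "\<dots> \<le> 2" using sums_unique[OF g] by simp
  finally show "s y \<le> 2" .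
qed

lemma key: assumes y: "y \<in> X" and z: "z \<in> X" and close: "\<bar>s y - s z\<bar> < r n / 2"
  shows "m \<le> n \<Longrightarrow> sig m y = sig m z"
proof (induction m rule: less_induct)
  case (less m)
  have eqsum: "(\<Sum>k<m. tm k y) = (\<Sum>k<m. tm k z)"
    using less by (intro sum.cong) (auto simp: tm_def)
  show ?case
  proof (rule ccontr)
    assume ne: "sig m y \<noteq> sig m z"
    have one: "1 \<le> \<bar>real (sig m y) - real (sig m z)\<bar>"
    proof (cases "sig m y < sig m z")
      case True
      then have "real (sig m y) + 1 \<le> real (sig m z)" by (metis Suc_leI of_nat_Suc of_nat_le_iff add.commute)
      then show ?thesis by linarith
    next
      case False
      then have "sig m z < sig m y" using ne by linarith
      then have "real (sig m z) + 1 \<le> real (sig m y)" by (metis Suc_leI of_nat_Suc of_nat_le_iff add.commute)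
      then show ?thesis by linarith
    qed
    have "\<bar>tm m y - tm m z\<bar> = \<bar>real (sig m y) - real (sig m z)\<bar> * r m"
      using r_pos[of m] by (simp add: tm_def left_diff_distrib[symmetric] abs_mult)
    also have "\<dots> \<ge> r m" using mult_right_mono[OF one less_imp_le[OF r_pos[of m]]] by simp
    finally have A: "r m \<le> \<bar>tm m y - tm m z\<bar>" .
    have B: "s y - s z = (tail m y - tail m z) + (tm m y - tm m z)"
      using s_split[OF y, of m] s_split[OF z, of m] eqsum by simp
    have C: "\<bar>tail m y - tail m z\<bar> \<le> r m / 3"
      using tail_bound[OF y, of m] tail_bound[OF z, of m] by linarith
    have "r n \<le> r m" using r_anti less.prems by simp
    then show False using A B C close r_pos[of n] by linarith
  qed
qed

lemma s_close: "y \<in> X \<Longrightarrow> z \<in> X \<Longrightarrow> \<bar>s y - s z\<bar> < r n / 2 \<Longrightarrow> dist y z < 2 * eps n"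
  using key[of y z n n] sig_dist by simp

lemma sig_pred: "{y \<in> space (borel_on X). i < M n \<and> dist y (cs n ! i) < eps n} \<in> sets (borel_on X)"
proof (cases "i < M n")
  case True
  have "{y \<in> space (borel_on X). i < M n \<and> dist y (cs n ! i) < eps n} = X \<inter> ball (cs n ! i) (eps n)"
    using True by (auto simp: dist_commute)
  moreover have "X \<inter> ball (cs n ! i) (eps n) \<in> sets (borel_on X)"
    unfolding borel_on_def sets_restrict_space by (rule image_eqI[where x="ball (cs n ! i) (eps n)"]) auto
  ultimately show ?thesis by simp
next
  case False
  then show ?thesis by simp
qed

lemma sig_meas: "sig n \<in> measurable (borel_on X) (count_space UNIV)"
proof -
  have m: "(\<lambda>y. LEAST i. i < M n \<and> dist y (cs n ! i) < eps n) \<in> measurable (borel_on X) (count_space UNIV)"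
    by (rule measurable_Least, unfold pred_def, rule sig_pred)
  have eq: "sig n = (\<lambda>y. LEAST i. i < M n \<and> dist y (cs n ! i) < eps n)"
    by (rule ext) (simp only: sig_def)
  show ?thesis unfolding eq by (rule m)
qed

lemma tm_meas: "tm n \<in> borel_measurable (borel_on X)"
proof -
  have r: "real \<in> measurable (count_space UNIV) (borel :: real measure)" by simp
  have "(\<lambda>y. real (sig n y)) \<in> borel_measurable (borel_on X)"
    using measurable_compose[OF sig_meas r] .
  then have "(\<lambda>y. real (sig n y) * r n) \<in> borel_measurable (borel_on X)"
    by (rule borel_measurable_times) simp
  moreover have "tm n = (\<lambda>y. real (sig n y) * r n)" by (rule ext) (simp only: tm_def)
  ultimately show ?thesis by simp
qed
lemma s_meas: "s \<in> borel_measurable (borel_on X)"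
proof (rule borel_measurable_LIMSEQ_metric[of "\<lambda>i y. \<Sum>n<i. tm n y"])
  fix i show "(\<lambda>y. \<Sum>n<i. tm n y) \<in> borel_measurable (borel_on X)"
    by (rule borel_measurable_sum) (rule tm_meas)
next
  fix y assume "y \<in> space (borel_on X)"
  then have "y \<in> X" by simp
  then show "(\<lambda>i. \<Sum>n<i. tm n y) \<longlonglongrightarrow> s y"
    unfolding s_def by (intro summable_LIMSEQ summable_tm)
qed


definition K :: "real set" where "K = closure (s ` X)"
definition dl :: "nat \<Rightarrow> real" where "dl n = r n / 8"
definition psi :: "real \<Rightarrow> 'a" where
  "psi t = (SOME y. y \<in> X \<and> (\<forall>n. \<exists>z\<in>X. \<bar>s z - t\<bar> < dl n \<and> dist z y \<le> 2 * eps n))"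

lemma dl_pos: "0 < dl n" using r_pos by (simp add: dl_def)

lemma K_closed: "closed K" by (simp add: K_def)

lemma K_ne: "K \<noteq> {}" using Xne closure_subset[of "s ` X"] by (auto simp: K_def)

lemma sX_K: "y \<in> X \<Longrightarrow> s y \<in> K" using closure_subset[of "s ` X"] by (auto simp: K_def)

lemma psi_ex: assumes t: "t \<in> K"
  shows "\<exists>y. y \<in> X \<and> (\<forall>n. \<exists>z\<in>X. \<bar>s z - t\<bar> < dl n \<and> dist z y \<le> 2 * eps n)"
proof -
  have "\<forall>n. \<exists>z. z \<in> X \<and> \<bar>s z - t\<bar> < dl n"
  proof
    fix n
    from t obtain u where "u \<in> s ` X" "dist u t < dl n"
      using dl_pos[of n] unfolding K_def closure_approachable by blast
    then show "\<exists>z. z \<in> X \<and> \<bar>s z - t\<bar> < dl n" by (auto simp: dist_real_def)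
  qed
  then obtain zs where zs: "\<And>n. zs n \<in> X" "\<And>n. \<bar>s (zs n) - t\<bar> < dl n" by metis
  obtain l rr where l: "l \<in> X" "strict_mono rr" "(zs \<circ> rr) \<longlonglongrightarrow> l"
    using compact_imp_seq_compact[OF cmpX] zs(1) unfolding seq_compact_def by metis
  have "dist (zs n) l \<le> 2 * eps n" for n
  proof -
    have ev: "\<forall>\<^sub>F j in sequentially. dist (zs n) (zs (rr j)) \<le> 2 * eps n"
    proof (rule eventually_sequentiallyI[of n])
      fix j assume "n \<le> j"
      then have "n \<le> rr j" using seq_suble[OF l(2), of j] by simp
      then have "dl (rr j) \<le> dl n" using r_anti by (simp add: dl_def)
      have "\<bar>s (zs n) - s (zs (rr j))\<bar> < dl n + dl (rr j) + 0"
        using abs_tri[OF zs(2)[of n] zs(2)[of "rr j"], of 0] by simp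
      then have "\<bar>s (zs n) - s (zs (rr j))\<bar> < r n / 2"
        using \<open>dl (rr j) \<le> dl n\<close> r_pos[of n] by (simp add: dl_def)
      then show "dist (zs n) (zs (rr j)) \<le> 2 * eps n"
        using s_close[OF zs(1) zs(1)] by (simp add: less_imp_le)
    qed
    have "(\<lambda>j. dist (zs n) (zs (rr j))) \<longlonglongrightarrow> dist (zs n) l"
      using l(3) by (intro tendsto_intros) (simp add: o_def)
    then show ?thesis using ev by (intro tendsto_upperbound) auto
  qed
  then show ?thesis using l(1) zs by blast
qed

lemma psi_prop: assumes "t \<in> K"
  shows "psi t \<in> X" "\<And>n. \<exists>z\<in>X. \<bar>s z - t\<bar> < dl n \<and> dist z (psi t) \<le> 2 * eps n"
  using someI_ex[OF psi_ex[OF assms]] unfolding psi_def by blast+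

lemma eps_small: assumes "0 < e" "0 < c" shows "\<exists>n. c * eps n < e"
proof -
  obtain n where n: "c / e < real n" using reals_Archimedean2 by blast
  have "c < e * real n" using n assms by (simp add: field_simps)
  then have "c < e * real (Suc n)" using assms by (smt (verit) mult_left_mono of_nat_Suc)
  then have "c * eps n < e" using assms by (simp add: eps_def field_simps)
  then show ?thesis by blast
qed

lemma psi_s: assumes y: "y \<in> X" shows "psi (s y) = y"
proof -
  have lt: "dist y (psi (s y)) < 4 * eps n" for n
  proof -
    obtain z where z: "z \<in> X" "\<bar>s z - s y\<bar> < dl n" "dist z (psi (s y)) \<le> 2 * eps n"
      using psi_prop(2)[OF sX_K[OF y], of n] by blast
    have "\<bar>s z - s y\<bar> < r n / 2" using z(2) r_pos[of n] by (simp add: dl_def)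
    then have "dist z y < 2 * eps n" using s_close[OF z(1) y] by simp
    then show ?thesis using z(3) dist_triangle[of y "psi (s y)" z] by (simp add: dist_commute)
  qed
  have "dist y (psi (s y)) = 0"
  proof (rule ccontr)
    assume "dist y (psi (s y)) \<noteq> 0"
    then have "0 < dist y (psi (s y))" by simp
    then have "\<exists>n. 4 * eps n < dist y (psi (s y))" by (intro eps_small) auto
    then obtain n where "4 * eps n < dist y (psi (s y))" by blast
    then show False using lt[of n] by simp
  qed
  then show ?thesis by simp
qed

lemma psi_uc: assumes t: "t \<in> K" and t': "t' \<in> K" and c: "\<bar>t - t'\<bar> < dl n"
  shows "dist (psi t) (psi t') \<le> 6 * eps n"
proof -
  obtain z where z: "z \<in> X" "\<bar>s z - t\<bar> < dl n" "dist z (psi t) \<le> 2 * eps n"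
    using psi_prop(2)[OF t, of n] by blast
  obtain z' where z': "z' \<in> X" "\<bar>s z' - t'\<bar> < dl n" "dist z' (psi t') \<le> 2 * eps n"
    using psi_prop(2)[OF t', of n] by blast
  have "\<bar>s z - s z'\<bar> < dl n + dl n + dl n" using abs_tri[OF z(2) z'(2) less_imp_le[OF c]] .
  then have "\<bar>s z - s z'\<bar> < r n / 2" using r_pos[of n] by (simp add: dl_def)
  then have "dist z z' < 2 * eps n" using s_close[OF z(1) z'(1)] by simp
  then show ?thesis using z(3) z'(3) dist_triangle[of "psi t" "psi t'" z] dist_triangle[of z "psi t'" z']
    by (simp add: dist_commute)
qed

lemma psi_cont: "continuous_on K psi"
  unfolding continuous_on_iff
proof (intro ballI allI impI)
  fix t e assume t: "t \<in> K" and e: "(0::real) < e"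
  obtain n where n: "6 * eps n < e" using eps_small[OF e, of 6] by auto
  show "\<exists>d>0. \<forall>t'\<in>K. dist t' t < d \<longrightarrow> dist (psi t') (psi t) < e"
  proof (intro exI[of _ "dl n"] conjI ballI impI)
    show "0 < dl n" by (rule dl_pos)
    fix t' assume "t' \<in> K" "dist t' t < dl n"
    then show "dist (psi t') (psi t) < e" using psi_uc[of t' t n] t n by (simp add: dist_real_def)
  qed
qed

lemma ext_exists:
  fixes f :: "'a \<Rightarrow> real"
  assumes f: "continuous_on X f"
  obtains g B where "continuous_on UNIV g" "\<And>t. t \<in> K \<Longrightarrow> g t = f (psi t)" "\<And>t. \<bar>g t\<bar> \<le> B"
proof -
  obtain B where B: "0 \<le> B" "\<And>y. y \<in> X \<Longrightarrow> \<bar>f y\<bar> \<le> B" using cont_bounded[OF cmpX f] by blast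
  have c: "continuous_on K (f \<circ> psi)"
    using psi_prop(1) by (intro continuous_on_compose psi_cont continuous_on_subset[OF f]) auto
  have cl: "closedin (top_of_set UNIV) K" using K_closed by simp
  have bd: "\<And>t. t \<in> K \<Longrightarrow> norm ((f \<circ> psi) t) \<le> B" using B(2) psi_prop(1) by simp
  obtain g where "continuous_on UNIV g" "\<And>t. t \<in> K \<Longrightarrow> g t = (f \<circ> psi) t" "\<And>t. t \<in> UNIV \<Longrightarrow> norm (g t) \<le> B"
    using Tietze[OF c cl B(1) bd] by blast
  then show ?thesis using that[of g B] by auto
qed

end

context coding begin

theorem CT:
  fixes mu :: "nat \<Rightarrow> 'a measure"
  assumes mu: "\<And>j. mu j \<in> prob_borel_measures X"
  shows "\<exists>rr \<nu>. strict_mono rr \<and> \<nu> \<in> prob_borel_measures X \<and> weak_star_conv X (\<lambda>j. mu (rr j)) \<nu>"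
proof -
  have sp: "space (mu j) = X" and st: "sets (mu j) = sets (borel_on X)" and ps: "prob_space (mu j)" for j
    using mu[of j] by (auto simp: prob_borel_measures_def)
  have sm: "s \<in> measurable (mu j) borel" for j
    using s_meas by (simp add: measurable_cong_sets[OF st refl])
  define lam where "lam j = distr (mu j) borel s" for j
  have rd: "real_distribution (lam j)" for j
  proof -
    have "prob_space (lam j)" unfolding lam_def by (rule prob_space.prob_space_distr[OF ps sm])
    then show ?thesis by (simp add: real_distribution_def real_distribution_axioms_def lam_def)
  qed
  have int_lam: "integral\<^sup>L (lam j) h = integral\<^sup>L (mu j) (\<lambda>y. h (s y))"
    if "h \<in> borel_measurable borel" for j and h :: "real \<Rightarrow> real"
    unfolding lam_def by (rule integral_distr[OF sm that])
  have tight: "tight lam"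
    unfolding tight_def
  proof (intro conjI allI impI)
    show "real_distribution (lam n)" for n by (rule rd)
    fix e :: real assume "0 < e"
    have "measure (lam n) {-1<..2} = 1" for n
    proof -
      have "measure (lam n) {-1<..2} = measure (mu n) (s -` {-1<..2} \<inter> space (mu n))"
        unfolding lam_def by (rule measure_distr[OF sm]) simp
      also have "s -` {-1<..2} \<inter> space (mu n) = space (mu n)"
        using s_range sp by fastforce
      also have "measure (mu n) (space (mu n)) = 1" using prob_space.prob_space[OF ps] .
      finally show ?thesis .
    qed
    then show "\<exists>a b. a < b \<and> (\<forall>n. 1 - e < measure (lam n) {a<..b})"
      using \<open>0<e\<close> by (intro exI[of _ "-1"] exI[of _ 2]) auto
  qed
  obtain rr L where rr: "strict_mono rr" and L: "real_distribution L" and wc: "weak_conv_m (lam \<circ> id \<circ> rr) L"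
    using tight_imp_convergent_subsubsequence[OF tight strict_mono_id] by blast
  have conv: "(\<lambda>j. integral\<^sup>L (lam (rr j)) h) \<longlonglongrightarrow> integral\<^sup>L L h"
    if "\<And>t. isCont h t" "\<And>t. norm (h t) \<le> B" for h :: "real \<Rightarrow> real" and B
    using weak_conv_imp_integral_bdd_continuous_conv[of "lam \<circ> id \<circ> rr" L h B] rd L wc that by (simp add: o_def)
  interpret L: real_distribution L by (rule L)
  define hK where "hK t = min 1 (infdist t K)" for t
  have hK_cont: "isCont hK t" for t unfolding hK_def by (intro continuous_intros)
  have hK_bd: "norm (hK t) \<le> 1" for t unfolding hK_def using infdist_nonneg[of t K] by simp
  have hK_nn: "0 \<le> hK t" for t unfolding hK_def using infdist_nonneg[of t K] by simp
  have hK_meas: "hK \<in> borel_measurable borel"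
    using hK_cont by (intro borel_measurable_continuous_onI continuous_at_imp_continuous_on) auto
  have "integral\<^sup>L (lam j) hK = 0" for j
  proof -
    have "integral\<^sup>L (lam j) hK = integral\<^sup>L (mu j) (\<lambda>y. hK (s y))" by (rule int_lam[OF hK_meas])
    also have "\<dots> = integral\<^sup>L (mu j) (\<lambda>y. 0)"
      by (rule Bochner_Integration.integral_cong[OF refl]) (simp add: hK_def sp sX_K infdist_zero)
    finally show ?thesis by simp
  qed
  then have "(\<lambda>j. 0) \<longlonglongrightarrow> integral\<^sup>L L hK" using conv[OF hK_cont hK_bd] by simp
  then have "integral\<^sup>L L hK = 0" using LIMSEQ_const_iff by metis
  moreover have "integrable L hK"
    using hK_bd hK_meas by (intro L.integrable_const_bound[of _ 1]) auto
  ultimately have "AE t in L. hK t = 0"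
    using integral_nonneg_eq_0_iff_AE[of L hK] hK_nn by simp
  then have AEK: "AE t in L. t \<in> K"
  proof (rule AE_mp, intro AE_I2 impI)
    fix t assume "hK t = 0"
    then have "infdist t K = 0" using infdist_nonneg[of t K] by (simp add: hK_def min_def split: if_splits)
    then show "t \<in> K" using in_closure_iff_infdist_zero[OF K_ne] closure_closed[OF K_closed] by simp
  qed
  obtain x0 where x0: "x0 \<in> X" using Xne by blast
  define psi' where "psi' t = (if t \<in> K then psi t else x0)" for t
  have psi'_meas: "psi' \<in> measurable borel (borel_on X)"
  proof -
    have "(\<lambda>t. if t \<in> K then psi t else x0) \<in> borel_measurable borel"
      by (rule borel_measurable_continuous_on_if[OF borel_closed[OF K_closed] psi_cont continuous_on_const])
    then have "psi' \<in> borel_measurable borel" by (simp add: psi'_def[abs_def])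
    moreover have "psi' \<in> space borel \<rightarrow> X" using psi_prop(1) x0 by (auto simp: psi'_def)
    ultimately show ?thesis unfolding borel_on_def by (simp add: measurable_restrict_space2_iff)
  qed
  have psi'_L: "psi' \<in> measurable L (borel_on X)"
    using psi'_meas by (simp add: measurable_cong_sets[OF L.events_eq_borel refl])
  define \<nu> where "\<nu> = distr L (borel_on X) psi'"
  have \<nu>_prob: "\<nu> \<in> prob_borel_measures X"
    unfolding \<nu>_def prob_borel_measures_def using L.prob_space_distr[OF psi'_L] by simp
  have "weak_star_conv X (\<lambda>j. mu (rr j)) \<nu>"
    unfolding weak_star_conv_def
  proof (intro allI impI)
    fix f :: "'a \<Rightarrow> real" assume f: "continuous_on X f"
    obtain g B where g: "continuous_on UNIV g" "\<And>t. t \<in> K \<Longrightarrow> g t = f (psi t)" "\<And>t. \<bar>g t\<bar> \<le> B"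
      using ext_exists[OF f] by blast
    have gm: "g \<in> borel_measurable borel" using g(1) by (rule borel_measurable_continuous_onI)
    have fm: "f \<in> borel_measurable (borel_on X)" using f by (rule cont_meas)
    have "integral\<^sup>L \<nu> f = integral\<^sup>L L (\<lambda>t. f (psi' t))"
      unfolding \<nu>_def by (rule integral_distr[OF psi'_L fm])
    also have "\<dots> = integral\<^sup>L L g"
    proof (rule integral_cong_AE)
      show "(\<lambda>t. f (psi' t)) \<in> borel_measurable L"
        using measurable_compose[OF psi'_L fm] .
      show "g \<in> borel_measurable L" using gm by (simp add: measurable_cong_sets[OF L.events_eq_borel refl])
      show "AE t in L. f (psi' t) = g t" using AEK by eventually_elim (simp add: psi'_def g(2))
    qed
    finally have eq1: "integral\<^sup>L \<nu> f = integral\<^sup>L L g" .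
    have eq2: "integral\<^sup>L (lam (rr j)) g = integral\<^sup>L (mu (rr j)) f" for j
    proof -
      have "integral\<^sup>L (lam (rr j)) g = integral\<^sup>L (mu (rr j)) (\<lambda>y. g (s y))" by (rule int_lam[OF gm])
      also have "\<dots> = integral\<^sup>L (mu (rr j)) f"
        by (rule Bochner_Integration.integral_cong[OF refl]) (simp add: sp g(2) sX_K psi_s)
      finally show ?thesis .
    qed
    have gc: "isCont g t" for t using g(1) continuous_on_eq_continuous_at[of UNIV g] by blast
    have gb: "norm (g t) \<le> B" for t using g(3)[of t] by simp
    have "(\<lambda>j. integral\<^sup>L (lam (rr j)) g) \<longlonglongrightarrow> integral\<^sup>L L g"
      by (rule conv[OF gc gb])
    then have "(\<lambda>j. integral\<^sup>L (mu (rr j)) f) \<longlonglongrightarrow> integral\<^sup>L L g" unfolding eq2 .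
    then show "(\<lambda>j. integral\<^sup>L (mu (rr j)) f) \<longlonglongrightarrow> integral\<^sup>L \<nu> f" unfolding eq1 .
  qed
  then show ?thesis using rr \<nu>_prob by blast
qed

end

lemma CT_general:
  fixes X :: "'a::metric_space set" and mu :: "nat \<Rightarrow> 'a measure"
  assumes cX: "compact X" and mu: "\<And>j. mu j \<in> prob_borel_measures X"
  shows "\<exists>rr \<nu>. strict_mono rr \<and> \<nu> \<in> prob_borel_measures X \<and> weak_star_conv X (\<lambda>j. mu (rr j)) \<nu>"
proof -
  have p0: "prob_space (mu 0)" and s0: "space (mu 0) = X" using mu[of 0] by (simp_all add: prob_borel_measures_def)
  have "space (mu 0) \<noteq> {}" using p0 by (rule prob_space.not_empty)
  then have Xne: "X \<noteq> {}" using s0 by simp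
  have tb: "\<forall>e>0. \<exists>k. finite k \<and> k \<subseteq> X \<and> X \<subseteq> (\<Union>x\<in>k. ball x e)"
    by (rule seq_compact_imp_totally_bounded[OF compact_imp_seq_compact[OF cX]])
  have "\<forall>n. \<exists>l. l \<noteq> [] \<and> (\<forall>y\<in>X. \<exists>i<length l. dist y (l ! i) < 1 / real (Suc n))"
  proof
    fix n
    have pos: "0 < 1 / real (Suc n)" by simp
    from tb[rule_format, OF pos] obtain k where k: "finite k" "k \<subseteq> X" "X \<subseteq> (\<Union>x\<in>k. ball x (1 / real (Suc n)))"
      by blast
    obtain l where l: "set l = k" using finite_list[OF k(1)] by blast
    have "l \<noteq> []" using k(3) Xne l by auto
    moreover have "\<forall>y\<in>X. \<exists>i<length l. dist y (l ! i) < 1 / real (Suc n)"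
    proof
      fix y assume "y \<in> X"
      then obtain c where c: "c \<in> k" "y \<in> ball c (1 / real (Suc n))" using k(3) by blast
      then obtain i where i: "i < length l" "l ! i = c" using l by (auto simp: in_set_conv_nth)
      have "dist y (l ! i) < 1 / real (Suc n)" using c(2) i(2) by (simp add: dist_commute)
      then show "\<exists>i<length l. dist y (l ! i) < 1 / real (Suc n)" using i(1) by blast
    qed
    ultimately show "\<exists>l. l \<noteq> [] \<and> (\<forall>y\<in>X. \<exists>i<length l. dist y (l ! i) < 1 / real (Suc n))" by blast
  qed
  from choice[OF this] obtain cs where cs: "\<forall>n. cs n \<noteq> [] \<and> (\<forall>y\<in>X. \<exists>i<length (cs n). dist y (cs n ! i) < 1 / real (Suc n))"
    by blast
  have "coding X cs"
  proof
    show "compact X" by (rule cX)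
    show "X \<noteq> {}" by (rule Xne)
    show "\<And>n y. y \<in> X \<Longrightarrow> \<exists>i<length (cs n). dist y (cs n ! i) < 1 / real (Suc n)" using cs by blast
    show "\<And>n. cs n \<noteq> []" using cs by blast
  qed
  then show ?thesis by (rule coding.CT[OF _ mu])
qed

lemma harm_ln: "(\<lambda>N. harm N / ln (real N)) \<longlonglongrightarrow> (1::real)"
proof -
  have lnt: "filterlim (\<lambda>N. ln (real N)) at_top sequentially"
    by (rule filterlim_compose[OF ln_at_top filterlim_real_sequentially])
  have "(\<lambda>N. (harm N - ln (real N)) / ln (real N)) \<longlonglongrightarrow> (0::real)"
    by (rule tendsto_divide_0[OF euler_mascheroni_LIMSEQ filterlim_at_top_imp_at_infinity[OF lnt]])
  then have "(\<lambda>N. 1 + (harm N - ln (real N)) / ln (real N)) \<longlonglongrightarrow> (1::real)"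
    using tendsto_add[OF tendsto_const, of _ 0 sequentially 1] by simp
  moreover have "\<forall>\<^sub>F N in sequentially. 1 + (harm N - ln (real N)) / ln (real N) = harm N / ln (real N)"
  proof (rule eventually_sequentiallyI[of 2])
    fix N :: nat assume "2 \<le> N"
    then have "0 < ln (real N)" by simp
    then show "1 + (harm N - ln (real N)) / ln (real N) = harm N / ln (real N)"
      by (simp add: field_simps)
  qed
  ultimately show ?thesis by (rule Lim_transform_eventually)
qed

lemma inv_ln: "(\<lambda>N. 1 / ln (real N)) \<longlonglongrightarrow> (0::real)"
  using tendsto_inverse_0_at_top[OF filterlim_compose[OF ln_at_top filterlim_real_sequentially]]
  by (simp add: divide_inverse)

definition aw :: "nat \<Rightarrow> nat \<Rightarrow> real" where
  "aw N n = (if n < N then 1 / (real n + 1) else 1)"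

lemma aw_nonneg: "0 \<le> aw N n" by (simp add: aw_def)
lemma aw_le1: "aw N n \<le> 1" by (simp add: aw_def)

lemma sum_inv_shift: "(\<Sum>n=1..m. 1 / (real n + 1)) = harm (Suc m) - 1"
proof (induction m)
  case 0 then show ?case by (simp add: harm_def)
next
  case (Suc m)
  have "(\<Sum>n=1..Suc m. 1 / (real n + 1)) = (\<Sum>n=1..m. 1 / (real n + 1)) + 1 / (real (Suc m) + 1)"
    by simp
  also have "\<dots> = harm (Suc (Suc m)) - 1"
  proof -
    have "harm (Suc (Suc m)) = harm (Suc m) + (1::real) / (real (Suc m) + 1)"
      by (simp add: harm_Suc divide_inverse add.commute)
    then show ?thesis using Suc by simp
  qed
  finally show ?case .
qed

lemma sum_aw: assumes "1 \<le> N" shows "(\<Sum>n=1..N. aw N n) = harm N"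
proof -
  obtain m where m: "N = Suc m" using assms by (cases N) auto
  have "(\<Sum>n=1..Suc m. aw (Suc m) n) = (\<Sum>n=1..m. aw (Suc m) n) + aw (Suc m) (Suc m)" by simp
  also have "(\<Sum>n=1..m. aw (Suc m) n) = (\<Sum>n=1..m. 1 / (real n + 1))"
    by (intro sum.cong) (auto simp: aw_def)
  also have "aw (Suc m) (Suc m) = 1" by (simp add: aw_def)
  finally show ?thesis using m sum_inv_shift[of m] by simp
qed

lemma alg0: fixes x y a :: real assumes "0 < a" shows
  "x / a + y / (a + 1) = (x + y) / (a + 1) + x / (a * (a + 1))"
proof -
  have h: "a \<noteq> 0" "a + 1 \<noteq> 0" using assms by auto
  show ?thesis using h by (simp add: divide_simps) (simp add: algebra_simps)
qed

lemma alg1: fixes x y :: real shows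
  "x / real (Suc k) + y / real (Suc (Suc k)) = (x + y) / real (Suc (Suc k)) + x / (real (Suc k) * (real (Suc k) + 1))"
proof -
  have "real (Suc (Suc k)) = real (Suc k) + 1" by simp
  then show ?thesis using alg0[of "real (Suc k)" x y] by simp
qed

lemma abel0:
  fixes a :: "nat \<Rightarrow> real"
  shows "(\<Sum>n=1..Suc m. a n / real n) =
    (\<Sum>k=1..Suc m. a k) / real (Suc m) + (\<Sum>n=1..m. (\<Sum>k=1..n. a k) / (real n * (real n + 1)))"
proof (induction m)
  case 0 then show ?case by simp
next
  case (Suc m)
  let ?A = "\<lambda>n. (\<Sum>k=1..n. a k)"
  have "(\<Sum>n=1..Suc (Suc m). a n / real n) = (\<Sum>n=1..Suc m. a n / real n) + a (Suc (Suc m)) / real (Suc (Suc m))"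
    by simp
  also have "\<dots> = ?A (Suc m) / real (Suc m) + (\<Sum>n=1..m. ?A n / (real n * (real n + 1)))
      + a (Suc (Suc m)) / real (Suc (Suc m))" using Suc by simp
  also have "\<dots> = ?A (Suc (Suc m)) / real (Suc (Suc m)) + (\<Sum>n=1..Suc m. ?A n / (real n * (real n + 1)))"
  proof -
    have e1: "?A (Suc (Suc m)) = ?A (Suc m) + a (Suc (Suc m))" by simp
    have e2: "(\<Sum>n=1..Suc m. ?A n / (real n * (real n + 1))) = (\<Sum>n=1..m. ?A n / (real n * (real n + 1))) + ?A (Suc m) / (real (Suc m) * (real (Suc m) + 1))"
      by simp
    show ?thesis unfolding e1 e2 using alg1[of "?A (Suc m)" m "a (Suc (Suc m))"] by linarith
  qed
  finally show ?case .
qed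

lemma abel:
  fixes a :: "nat \<Rightarrow> real" assumes "1 \<le> N"
  shows "(\<Sum>n=1..N. a n / real n) = (\<Sum>n=1..N. aw N n * ((\<Sum>k=1..n. a k) / real n))"
proof -
  obtain m where m: "N = Suc m" using assms by (cases N) auto
  have "(\<Sum>n=1..Suc m. aw (Suc m) n * ((\<Sum>k=1..n. a k) / real n))
     = (\<Sum>n=1..m. aw (Suc m) n * ((\<Sum>k=1..n. a k) / real n)) + (\<Sum>k=1..Suc m. a k) / real (Suc m)"
    by (simp add: aw_def)
  also have "(\<Sum>n=1..m. aw (Suc m) n * ((\<Sum>k=1..n. a k) / real n)) = (\<Sum>n=1..m. (\<Sum>k=1..n. a k) / (real n * (real n + 1)))"
    by (intro sum.cong) (auto simp: aw_def)
  finally show ?thesis using m abel0[of a m] by simp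
qed

lemma claimA:
  fixes X :: "'a::metric_space set" and F :: "('a \<Rightarrow> real) set"
  assumes cX: "compact X" and TX: "T ` X \<subseteq> X" and xX: "x \<in> X"
    and F: "finite F" "\<forall>f\<in>F. continuous_on X f" and e: "0 < e"
  shows "\<exists>n0\<ge>1. \<forall>n\<ge>n0. \<exists>\<mu>\<in>V X T x. \<forall>f\<in>F. \<bar>integral\<^sup>L (Emp X T x n) f - integral\<^sup>L \<mu> f\<bar> < e"
proof (rule ccontr)
  assume H: "\<not> (\<exists>n0\<ge>1. \<forall>n\<ge>n0. \<exists>\<mu>\<in>V X T x. \<forall>f\<in>F. \<bar>integral\<^sup>L (Emp X T x n) f - integral\<^sup>L \<mu> f\<bar> < e)"
  define bad where "bad n \<longleftrightarrow> 1 \<le> n \<and> (\<forall>\<mu>\<in>V X T x. \<exists>f\<in>F. e \<le> \<bar>integral\<^sup>L (Emp X T x n) f - integral\<^sup>L \<mu> f\<bar>)" for n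
  have unb: "\<forall>m. \<exists>n\<ge>m. n \<in> {n. bad n}"
  proof
    fix m :: nat
    have "1 \<le> max m 1" by (rule max.cobounded2)
    then have "\<not> (\<forall>n\<ge>max m 1. \<exists>\<mu>\<in>V X T x. \<forall>f\<in>F. \<bar>integral\<^sup>L (Emp X T x n) f - integral\<^sup>L \<mu> f\<bar> < e)"
      using H by blast
    then obtain n where n: "max m 1 \<le> n" "\<forall>\<mu>\<in>V X T x. \<exists>f\<in>F. e \<le> \<bar>integral\<^sup>L (Emp X T x n) f - integral\<^sup>L \<mu> f\<bar>"
      by (auto simp: not_less)
    then show "\<exists>n\<ge>m. n \<in> {n. bad n}" unfolding bad_def by auto
  qed
  then have inf: "infinite {n. bad n}" by (simp add: infinite_nat_iff_unbounded_le)
  define en where "en = enumerate {n. bad n}"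
  have en_sm: "strict_mono en" unfolding en_def by (rule strict_mono_enumerate[OF inf])
  have en_bad: "bad (en j)" for j unfolding en_def using enumerate_in_set[OF inf] by simp
  have prob: "Emp X T x (en j) \<in> prob_borel_measures X" for j
    using en_bad[of j] Emp_prob[OF TX xX] by (simp add: bad_def)
  obtain rr \<nu> where rr: "strict_mono rr" and \<nu>: "\<nu> \<in> prob_borel_measures X"
    and wc: "weak_star_conv X (\<lambda>j. Emp X T x (en (rr j))) \<nu>"
  proof -
    have "\<exists>rr \<nu>. strict_mono rr \<and> \<nu> \<in> prob_borel_measures X \<and> weak_star_conv X (\<lambda>j. Emp X T x (en (rr j))) \<nu>"
      by (rule CT_general[of X "\<lambda>j. Emp X T x (en j)", OF cX prob])
    then show ?thesis using that by blast
  qed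
  have sm: "strict_mono (\<lambda>j. en (rr j))" using strict_mono_o[OF en_sm rr] by (simp add: o_def)
  have ge1: "\<forall>j. 1 \<le> en (rr j)" using en_bad by (simp add: bad_def)
  have \<nu>V: "\<nu> \<in> V X T x"
    unfolding V_def using \<nu> sm ge1 wc by blast
  have "\<forall>f\<in>F. \<forall>\<^sub>F j in sequentially. \<bar>integral\<^sup>L (Emp X T x (en (rr j))) f - integral\<^sup>L \<nu> f\<bar> < e"
  proof
    fix f assume "f \<in> F"
    then have "(\<lambda>j. integral\<^sup>L (Emp X T x (en (rr j))) f) \<longlonglongrightarrow> integral\<^sup>L \<nu> f"
      using wc F(2) unfolding weak_star_conv_def by blast
    from tendstoD[OF this e] show "\<forall>\<^sub>F j in sequentially. \<bar>integral\<^sup>L (Emp X T x (en (rr j))) f - integral\<^sup>L \<nu> f\<bar> < e"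
      by (simp add: dist_real_def)
  qed
  then have "\<forall>\<^sub>F j in sequentially. \<forall>f\<in>F. \<bar>integral\<^sup>L (Emp X T x (en (rr j))) f - integral\<^sup>L \<nu> f\<bar> < e"
    by (rule eventually_ball_finite[OF F(1)])
  then obtain j where j: "\<forall>f\<in>F. \<bar>integral\<^sup>L (Emp X T x (en (rr j))) f - integral\<^sup>L \<nu> f\<bar> < e"
    unfolding eventually_sequentially by blast
  from en_bad[of "rr j"] \<nu>V obtain f where "f \<in> F" "e \<le> \<bar>integral\<^sup>L (Emp X T x (en (rr j))) f - integral\<^sup>L \<nu> f\<bar>"
    unfolding bad_def by blast
  with j show False by fastforce
qed

lemma est:
  fixes u v :: "nat \<Rightarrow> real"
  assumes M: "2 \<le> M" and B: "0 \<le> B" and ub: "\<And>n. \<bar>u n\<bar> \<le> B" and vb: "\<And>n. 1 \<le> n \<Longrightarrow> \<bar>v n\<bar> \<le> B"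
    and uv: "\<And>n. n0 \<le> n \<Longrightarrow> \<bar>v n - u n\<bar> \<le> e4" and e4: "0 \<le> e4"
  shows "\<bar>(\<Sum>n=1..M. aw M n / harm M * u n) - (\<Sum>n=1..M. aw M n * v n) / ln (real M)\<bar>
     \<le> B * \<bar>1 - harm M / ln (real M)\<bar> + 2 * B * real n0 * (1 / ln (real M)) + harm M / ln (real M) * e4"
proof -
  define H where "H = (harm M :: real)"
  define L where "L = ln (real M)"
  define S1 where "S1 = (\<Sum>n=1..M. aw M n * u n)"
  define S2 where "S2 = (\<Sum>n=1..M. aw M n * v n)"
  have H: "0 < H" unfolding H_def using M by simp
  have L: "0 < L" unfolding L_def using M by simp
  have sH: "(\<Sum>n=1..M. aw M n) = H" unfolding H_def using M by (intro sum_aw) simp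
  have c1: "(\<Sum>n=1..M. aw M n / harm M * u n) = S1 / H"
    unfolding S1_def H_def by (simp add: sum_divide_distrib)
  have diff: "S1 / H - S2 / L = S1 * (1 / H - 1 / L) + (S1 - S2) / L"
    using H L by (simp add: field_simps)
  have aS1: "\<bar>S1\<bar> \<le> H * B"
  proof -
    have "\<bar>S1\<bar> \<le> (\<Sum>n=1..M. \<bar>aw M n * u n\<bar>)" unfolding S1_def by (rule sum_abs)
    also have "\<dots> \<le> (\<Sum>n=1..M. aw M n * B)"
      by (intro sum_mono) (simp add: abs_mult aw_nonneg mult_left_mono ub)
    also have "\<dots> = H * B" using sH by (simp add: sum_distrib_right[symmetric])
    finally show ?thesis .
  qed
  have t1: "\<bar>S1 * (1 / H - 1 / L)\<bar> \<le> B * \<bar>1 - H / L\<bar>"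
  proof -
    have "\<bar>S1 * (1 / H - 1 / L)\<bar> = \<bar>S1\<bar> * \<bar>1 / H - 1 / L\<bar>" by (simp add: abs_mult)
    also have "\<dots> \<le> (H * B) * \<bar>1 / H - 1 / L\<bar>" by (intro mult_right_mono aS1) simp
    also have "\<dots> = B * \<bar>H * (1 / H - 1 / L)\<bar>" using H by (simp add: abs_mult)
    also have "H * (1 / H - 1 / L) = 1 - H / L" using H by (simp add: field_simps)
    finally show ?thesis .
  qed
  have aS12: "\<bar>S1 - S2\<bar> \<le> 2 * B * real n0 + H * e4"
  proof -
    have "\<bar>S1 - S2\<bar> = \<bar>\<Sum>n=1..M. aw M n * (u n - v n)\<bar>"
      unfolding S1_def S2_def by (simp add: sum_subtractf right_diff_distrib)
    also have "\<dots> \<le> (\<Sum>n=1..M. \<bar>aw M n * (u n - v n)\<bar>)" by (rule sum_abs)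
    also have "\<dots> \<le> (\<Sum>n=1..M. (if n < n0 then 2 * B else 0) + aw M n * e4)"
    proof (rule sum_mono)
      fix n assume n: "n \<in> {1..M}"
      have a0: "0 \<le> aw M n" "aw M n \<le> 1" by (rule aw_nonneg, rule aw_le1)
      show "\<bar>aw M n * (u n - v n)\<bar> \<le> (if n < n0 then 2 * B else 0) + aw M n * e4"
      proof (cases "n < n0")
        case True
        have "\<bar>u n - v n\<bar> \<le> 2 * B" using ub[of n] vb[of n] n by auto
        then have "\<bar>aw M n * (u n - v n)\<bar> \<le> 1 * (2 * B)"
          unfolding abs_mult using a0 by (intro mult_mono) auto
        moreover have "0 \<le> aw M n * e4" using a0 e4 by simp
        ultimately show ?thesis using True by simp
      next
        case False
        have "\<bar>u n - v n\<bar> \<le> e4" using uv[of n] False by (simp add: abs_minus_commute)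
        then have "\<bar>aw M n * (u n - v n)\<bar> \<le> aw M n * e4"
          unfolding abs_mult using a0 by (simp add: mult_left_mono)
        then show ?thesis using False by simp
      qed
    qed
    also have "\<dots> = (\<Sum>n=1..M. (if n < n0 then 2 * B else 0)) + H * e4"
      using sH by (simp add: sum.distrib sum_distrib_right[symmetric])
    also have "(\<Sum>n=1..M. (if n < n0 then 2 * B else 0)) \<le> 2 * B * real n0"
    proof -
      have "(\<Sum>n=1..M. (if n < n0 then 2 * B else 0)) = (\<Sum>n\<in>{n\<in>{1..M}. n < n0}. 2 * B)"
        by (rule sum.inter_filter[symmetric]) simp
      also have "\<dots> = 2 * B * real (card ({n\<in>{1..M}. n < n0}))" by simp
      also have "card ({n\<in>{1..M}. n < n0}) \<le> n0"
      proof -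
        have "card ({n\<in>{1..M}. n < n0}) \<le> card {..<n0}" by (intro card_mono) auto
        then show ?thesis by simp
      qed
      then have "2 * B * real (card ({n\<in>{1..M}. n < n0})) \<le> 2 * B * real n0"
        using B by (intro mult_left_mono) auto
      finally show ?thesis .
    qed
    finally show ?thesis by simp
  qed
  have t2: "\<bar>(S1 - S2) / L\<bar> \<le> 2 * B * real n0 * (1 / L) + H / L * e4"
  proof -
    have "\<bar>(S1 - S2) / L\<bar> = \<bar>S1 - S2\<bar> / L" using L by simp
    also have "\<dots> \<le> (2 * B * real n0 + H * e4) / L" using aS12 L by (intro divide_right_mono) auto
    also have "\<dots> = 2 * B * real n0 * (1 / L) + H / L * e4" by (simp add: add_divide_distrib)
    finally show ?thesis .
  qed
  have "\<bar>S1 / H - S2 / L\<bar> \<le> B * \<bar>1 - H / L\<bar> + (2 * B * real n0 * (1 / L) + H / L * e4)"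
    unfolding diff using t1 t2 abs_triangle_ineq[of "S1 * (1 / H - 1 / L)" "(S1 - S2) / L"] by linarith
  then show ?thesis unfolding c1 by (simp add: H_def L_def S2_def add.assoc)
qed

theorem proposition2p1:
  fixes X :: "'a::metric_space set" and T :: "'a \<Rightarrow> 'a" and x :: 'a
  assumes "compact X" and "continuous_on X T" and "T ` X \<subseteq> X" and "x \<in> X"
  shows "V_log X T x \<subseteq> (weak_star_topology X) closure_of (conv_measures X (V X T x))"
proof
  fix \<nu> assume "\<nu> \<in> V_log X T x"
  then obtain N where \<nu>p: "\<nu> \<in> prob_borel_measures X" and N: "strict_mono N" "\<forall>k. 2 \<le> N k"
     and wc: "weak_star_conv X (\<lambda>k. Emp_log X T x (N k)) \<nu>" unfolding V_log_def by blast
  show "\<nu> \<in> weak_star_topology X closure_of conv_measures X (V X T x)"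
  proof (rule closure_crit[OF prob_fbm[OF \<nu>p]])
    fix F :: "('a \<Rightarrow> real) set" and e :: real
    assume F: "finite F" "\<forall>f\<in>F. continuous_on X f" and e: "0 < e"
    have e4: "0 < e / 4" using e by simp
    obtain n0 where n0: "1 \<le> n0" "\<forall>n\<ge>n0. \<exists>\<mu>\<in>V X T x. \<forall>f\<in>F. \<bar>integral\<^sup>L (Emp X T x n) f - integral\<^sup>L \<mu> f\<bar> < e / 4"
      using claimA[OF assms(1) assms(3) assms(4) F e4] by blast
    define mm where "mm n = (SOME \<mu>. \<mu> \<in> V X T x \<and> (\<forall>f\<in>F. \<bar>integral\<^sup>L (Emp X T x (max n n0)) f - integral\<^sup>L \<mu> f\<bar> < e / 4))" for n
    have mm: "mm n \<in> V X T x \<and> (\<forall>f\<in>F. \<bar>integral\<^sup>L (Emp X T x (max n n0)) f - integral\<^sup>L (mm n) f\<bar> < e / 4)" for n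
    proof -
      have "\<exists>\<mu>\<in>V X T x. \<forall>f\<in>F. \<bar>integral\<^sup>L (Emp X T x (max n n0)) f - integral\<^sup>L \<mu> f\<bar> < e / 4"
        using n0(2) by simp
      then have "\<exists>\<mu>. \<mu> \<in> V X T x \<and> (\<forall>f\<in>F. \<bar>integral\<^sup>L (Emp X T x (max n n0)) f - integral\<^sup>L \<mu> f\<bar> < e / 4)"
        by blast
      then show ?thesis unfolding mm_def by (rule someI_ex)
    qed
    have mmV: "mm n \<in> V X T x" for n using mm by blast
    have mmP: "mm n \<in> prob_borel_measures X" for n using mmV[of n] by (simp add: V_def)
    define c where "c M = wsum_measure X {1..M} (\<lambda>n. aw M n / harm M) mm" for M
    have ws: "wsum_setup X {1..M} (\<lambda>n. aw M n / harm M) mm" for M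
    proof
      show "finite {1..M}" by simp
      show "0 \<le> aw M i / harm M" for i by (intro divide_nonneg_nonneg aw_nonneg harm_nonneg)
      show "mm i \<in> finite_borel_measures X" for i by (rule prob_fbm[OF mmP])
    qed
    have c_conv: "c M \<in> conv_measures X (V X T x)" if M: "1 \<le> M" for M
    proof -
      have hp: "harm M > (0::real)" using M by simp
      then have hn: "harm M \<noteq> (0::real)" by (rule less_imp_neq[symmetric])
      have "sum (\<lambda>n. aw M n / harm M) {1..M} = sum (aw M) {1..M} / harm M"
        by (simp add: sum_divide_distrib[symmetric])
      then have s1: "sum (\<lambda>n. aw M n / harm M) {1..M} = 1"
        using sum_aw[OF M] hn by simp
      have "c M = wsum_measure X {1..M} (\<lambda>n. aw M n / harm M) mm \<and> finite {1..M} \<and> {1..M} \<noteq> {} \<and>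
          (\<forall>i\<in>{1..M}. 0 \<le> aw M i / harm M \<and> mm i \<in> V X T x) \<and> sum (\<lambda>n. aw M n / harm M) {1..M} = 1"
        using M s1 mmV by (auto simp: c_def intro!: divide_nonneg_nonneg aw_nonneg harm_nonneg)
      then show ?thesis unfolding conv_measures_def by blast
    qed
    have c_fbm: "c M \<in> finite_borel_measures X" for M unfolding c_def by (rule wsum_setup.W_fbm[OF ws])
    have Nlim: "filterlim N sequentially sequentially" by (rule filterlim_subseq[OF N(1)])
    have hl: "(\<lambda>k. harm (N k) / ln (real (N k))) \<longlonglongrightarrow> (1::real)"
      using LIMSEQ_subseq_LIMSEQ[OF harm_ln N(1)] by (simp add: o_def)
    have il: "(\<lambda>k. 1 / ln (real (N k))) \<longlonglongrightarrow> (0::real)"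
      using LIMSEQ_subseq_LIMSEQ[OF inv_ln N(1)] by (simp add: o_def)
    have key: "\<forall>\<^sub>F k in sequentially. \<bar>integral\<^sup>L (c (N k)) f - integral\<^sup>L \<nu> f\<bar> < e" if f: "f \<in> F" for f
    proof -
      have fc: "continuous_on X f" using F(2) f by blast
      obtain B where B: "0 \<le> B" "\<And>y. y \<in> X \<Longrightarrow> \<bar>f y\<bar> \<le> B" using cont_bounded[OF assms(1) fc] by blast
      have fm: "f \<in> borel_measurable (borel_on X)" by (rule cont_meas[OF fc])
      define u where "u n = integral\<^sup>L (mm n) f" for n
      define v where "v n = integral\<^sup>L (Emp X T x n) f" for n
      have ub: "\<bar>u n\<bar> \<le> B" for n unfolding u_def by (rule prob_int_bound[OF mmP fm B(2)])
      have vb: "\<bar>v n\<bar> \<le> B" if "1 \<le> n" for n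
        unfolding v_def by (rule prob_int_bound[OF Emp_prob[OF assms(3,4) that] fm B(2)])
      have uv: "\<bar>v n - u n\<bar> \<le> e / 4" if "n0 \<le> n" for n
        using mm[of n] f that by (simp add: u_def v_def max_absorb1 less_imp_le)
      have cint: "integral\<^sup>L (c M) f = (\<Sum>n=1..M. aw M n / harm M * u n)" for M
        unfolding c_def u_def by (rule wsum_setup.W_integral[OF ws fm B(2)])
      have vform: "v n = (\<Sum>k=1..n. f ((T ^^ (k - 1)) x)) / real n" for n
        unfolding v_def by (rule Emp_int[OF assms(3,4) assms(1) fc])
      have lint: "integral\<^sup>L (Emp_log X T x M) f = (\<Sum>n=1..M. aw M n * v n) / ln (real M)" if M: "2 \<le> M" for M
      proof -
        have "integral\<^sup>L (Emp_log X T x M) f = (\<Sum>n=1..M. f ((T ^^ (n - 1)) x) / real n) / ln (real M)"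
          by (rule Emp_log_int[OF assms(3,4) assms(1) fc M])
        also have "(\<Sum>n=1..M. f ((T ^^ (n - 1)) x) / real n) = (\<Sum>n=1..M. aw M n * ((\<Sum>k=1..n. f ((T ^^ (k - 1)) x)) / real n))"
          using M by (intro abel) auto
        finally show ?thesis by (simp add: vform)
      qed
      define U where "U M = B * \<bar>1 - harm M / ln (real M)\<bar> + 2 * B * real n0 * (1 / ln (real M)) + harm M / ln (real M) * (e / 4)" for M
      have bound: "\<bar>integral\<^sup>L (c M) f - integral\<^sup>L (Emp_log X T x M) f\<bar> \<le> U M" if M: "2 \<le> M" for M
        unfolding cint lint[OF M] U_def using e4 by (intro est[OF M B(1) ub vb uv]) auto
      have "(\<lambda>k. U (N k)) \<longlonglongrightarrow> B * \<bar>1 - 1\<bar> + 2 * B * real n0 * 0 + 1 * (e / 4)"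
        unfolding U_def by (intro tendsto_intros hl il)
      then have Ul: "(\<lambda>k. U (N k)) \<longlonglongrightarrow> e / 4" by simp
      have ev1: "\<forall>\<^sub>F k in sequentially. U (N k) < e / 2"
        using order_tendstoD(2)[OF Ul, of "e / 2"] e by simp
      have "(\<lambda>k. integral\<^sup>L (Emp_log X T x (N k)) f) \<longlonglongrightarrow> integral\<^sup>L \<nu> f"
        using wc fc unfolding weak_star_conv_def by blast
      from tendstoD[OF this, of "e / 2"]
      have ev2: "\<forall>\<^sub>F k in sequentially. \<bar>integral\<^sup>L (Emp_log X T x (N k)) f - integral\<^sup>L \<nu> f\<bar> < e / 2"
        using e by (simp add: dist_real_def)
      show ?thesis
        using ev1 ev2
      proof eventually_elim
        case (elim k)
        have "\<bar>integral\<^sup>L (c (N k)) f - integral\<^sup>L (Emp_log X T x (N k)) f\<bar> \<le> U (N k)"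
          using bound N(2) by blast
        then show ?case using elim by linarith
      qed
    qed
    have "\<forall>\<^sub>F k in sequentially. \<forall>f\<in>F. \<bar>integral\<^sup>L (c (N k)) f - integral\<^sup>L \<nu> f\<bar> < e"
      by (rule eventually_ball_finite[OF F(1)]) (use key in blast)
    then obtain k where k: "\<forall>f\<in>F. \<bar>integral\<^sup>L (c (N k)) f - integral\<^sup>L \<nu> f\<bar> < e"
      unfolding eventually_sequentially by blast
    have "1 \<le> N k" using N(2)[rule_format, of k] by simp
    then show "\<exists>c\<in>conv_measures X (V X T x). c \<in> finite_borel_measures X \<and> (\<forall>f\<in>F. \<bar>integral\<^sup>L c f - integral\<^sup>L \<nu> f\<bar> < e)"
      using c_conv c_fbm k by blast
  qed
qed

end
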